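(* Let $M$ be a graded $R$-module, and give $qp.Spec_g(M)$ the quasi-Zariski topology. Then: (1) $qp.Spec_g(M)$ is a $T_1$-space if and only if it is a $T_0$-space and for every $Q\in qp.Spec_g(M)$, $Gr((Q:_RM))$ is a maximal element of $\{Gr((K:_RM))\mid K\in qp.Spec_g(M)\}$. (2) $qp.Spec_g(M)$ is a $T_1$-space if and only if it is a $T_0$-space and every graded quasi-primary submodule of $M$ satisfying the graded primeful property is a maximal element (with respect to inclusion) of $qp.Spec_g(M)$. (3) If $(0)\in qp.Spec_g(M)$, then $qp.Spec_g(M)$ is a $T_1$-space if and only if $(0)$ is the only graded quasi-primary submodule of $M$ satisfying the graded primeful property. (4) If $qp.Spec_g(M)$ is a $T_0$-space and $qp.Spec_g(M)=Max_g(M)$, then $qp.Spec_g(M)$ is a $T_1$-space.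
   Context: $R=\bigoplus_{g\in G}R_g$ is a graded commutative ring with identity graded by a group $G$, $h(R)=\bigcup_g R_g$; $M$ is a graded $R$-module, $h(M)$ its homogeneous elements. $Gr(I)$ is the graded radical of a graded ideal $I$. $(K:_RM)=\{r: rM\subseteq K\}$. Graded prime submodule: proper graded $P$ with $rm\in P$ ($r\in h(R), m\in h(M)$) implying $m\in P$ or $r\in(P:_RM)$. $Gr_M(K)$: intersection of graded prime submodules containing $K$ ($M$ if none). Graded primeful property of $K$: for each graded prime $p\supseteq(K:_RM)$ there is a graded prime submodule $P\supseteq K$ with $(P:_RM)=p$. Graded quasi-primary submodule: proper graded $Q$ with $rm\in Q$ ($r\in h(R),m\in h(M)$) implying $r\in Gr((Q:_RM))$ or $m\in Gr_M(Q)$. $qp.Spec_g(M)$: graded quasi-primary submodules with the graded primeful property. $qp\text{-}V_M^g(K)=\{Q\in qp.Spec_g(M): Gr((Q:_RM))\supseteq Gr((K:_RM))\}$; the quasi-Zariski topology has closed sets exactly these. $Max_g(M)$ is the set of graded maximal submodules of $M$, i.e. graded submodules $K\ne M$ with no graded submodule strictly between $K$ and $M$. *)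

theory Defs
  imports Main "HOL.Modules"
begin

text \<open>The ring is the whole type 'r (a commutative ring with 1), the module M is
the whole type 'm, with scalar multiplication scale, making it an R-module in the sense of
the locale module from HOL. The grading group G is the type 'g (a group, written additively,
not necessarily abelian). Rg g is the homogeneous component R_g, Mg g is M_g.\<close>

definition is_decomp :: "('g \<Rightarrow> 'a::ab_group_add set) \<Rightarrow> 'a \<Rightarrow> ('g \<Rightarrow> 'a) \<Rightarrow> bool" where
  "is_decomp A x c \<longleftrightarrow> finite {g. c g \<noteq> 0} \<and> (\<forall>g. c g \<in> A g) \<and> x = sum c {g. c g \<noteq> 0}"

definition direct_decomp :: "('g \<Rightarrow> 'a::ab_group_add set) \<Rightarrow> bool" where
  "direct_decomp A \<longleftrightarrow> (\<forall>x. \<exists>!c. is_decomp A x c)"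

definition add_subgroup :: "'a::ab_group_add set \<Rightarrow> bool" where
  "add_subgroup S \<longleftrightarrow> 0 \<in> S \<and> (\<forall>x\<in>S. \<forall>y\<in>S. x + y \<in> S \<and> - x \<in> S)"

definition hcomp :: "('g \<Rightarrow> 'a::ab_group_add set) \<Rightarrow> 'a \<Rightarrow> 'g \<Rightarrow> 'a" where
  "hcomp A x = (THE c. is_decomp A x c)"

definition homog :: "('g \<Rightarrow> 'a set) \<Rightarrow> 'a set" where
  "homog A = (\<Union>g. A g)"

definition graded_ring :: "('g::group_add \<Rightarrow> 'r::comm_ring_1 set) \<Rightarrow> bool" where
  "graded_ring Rg \<longleftrightarrow> (\<forall>g. add_subgroup (Rg g))
     \<and> (\<forall>g h. \<forall>a\<in>Rg g. \<forall>b\<in>Rg h. a * b \<in> Rg (g + h))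
     \<and> direct_decomp Rg"

definition graded_module ::
  "('r::comm_ring_1 \<Rightarrow> 'm::ab_group_add \<Rightarrow> 'm) \<Rightarrow> ('g::group_add \<Rightarrow> 'r set) \<Rightarrow> ('g \<Rightarrow> 'm set) \<Rightarrow> bool" where
  "graded_module scale Rg Mg \<longleftrightarrow> Modules.module scale \<and> graded_ring Rg
     \<and> (\<forall>g. add_subgroup (Mg g))
     \<and> (\<forall>g h. \<forall>a\<in>Rg g. \<forall>m\<in>Mg h. scale a m \<in> Mg (g + h))
     \<and> direct_decomp Mg"

definition is_ideal :: "'r::comm_ring_1 set \<Rightarrow> bool" where
  "is_ideal I \<longleftrightarrow> 0 \<in> I \<and> (\<forall>a\<in>I. \<forall>b\<in>I. a + b \<in> I) \<and> (\<forall>r. \<forall>a\<in>I. r * a \<in> I)"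

definition graded_ideal :: "('g \<Rightarrow> 'r::comm_ring_1 set) \<Rightarrow> 'r set \<Rightarrow> bool" where
  "graded_ideal Rg I \<longleftrightarrow> is_ideal I \<and> (\<forall>a\<in>I. \<forall>g. hcomp Rg a g \<in> I)"

definition graded_prime_ideal :: "('g \<Rightarrow> 'r::comm_ring_1 set) \<Rightarrow> 'r set \<Rightarrow> bool" where
  "graded_prime_ideal Rg p \<longleftrightarrow> graded_ideal Rg p \<and> p \<noteq> UNIV
     \<and> (\<forall>a\<in>homog Rg. \<forall>b\<in>homog Rg. a * b \<in> p \<longrightarrow> a \<in> p \<or> b \<in> p)"

definition Gr :: "('g \<Rightarrow> 'r::comm_ring_1 set) \<Rightarrow> 'r set \<Rightarrow> 'r set" where
  "Gr Rg I = {r. \<forall>g. \<exists>n::nat. n > 0 \<and> (hcomp Rg r g) ^ n \<in> I}"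

definition graded_submodule ::
  "('r::comm_ring_1 \<Rightarrow> 'm::ab_group_add \<Rightarrow> 'm) \<Rightarrow> ('g \<Rightarrow> 'm set) \<Rightarrow> 'm set \<Rightarrow> bool" where
  "graded_submodule scale Mg N \<longleftrightarrow> module.subspace scale N \<and> (\<forall>x\<in>N. \<forall>g. hcomp Mg x g \<in> N)"

definition colon :: "('r::comm_ring_1 \<Rightarrow> 'm \<Rightarrow> 'm) \<Rightarrow> 'm set \<Rightarrow> 'r set" where
  "colon scale K = {r. \<forall>m. scale r m \<in> K}"

definition graded_prime_submodule ::
  "('r::comm_ring_1 \<Rightarrow> 'm::ab_group_add \<Rightarrow> 'm) \<Rightarrow> ('g \<Rightarrow> 'r set) \<Rightarrow> ('g \<Rightarrow> 'm set) \<Rightarrow> 'm set \<Rightarrow> bool" where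
  "graded_prime_submodule scale Rg Mg P \<longleftrightarrow> graded_submodule scale Mg P \<and> P \<noteq> UNIV
     \<and> (\<forall>r\<in>homog Rg. \<forall>m\<in>homog Mg. scale r m \<in> P \<longrightarrow> m \<in> P \<or> r \<in> colon scale P)"

text \<open>Gr_M(K): intersection of graded prime submodules containing K (= M if there is none).\<close>
definition GrM :: "('r::comm_ring_1 \<Rightarrow> 'm::ab_group_add \<Rightarrow> 'm) \<Rightarrow> ('g \<Rightarrow> 'r set) \<Rightarrow> ('g \<Rightarrow> 'm set) \<Rightarrow> 'm set \<Rightarrow> 'm set" where
  "GrM scale Rg Mg K = \<Inter>{P. graded_prime_submodule scale Rg Mg P \<and> K \<subseteq> P}"

definition graded_primeful ::
  "('r::comm_ring_1 \<Rightarrow> 'm::ab_group_add \<Rightarrow> 'm) \<Rightarrow> ('g \<Rightarrow> 'r set) \<Rightarrow> ('g \<Rightarrow> 'm set) \<Rightarrow> 'm set \<Rightarrow> bool" where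
  "graded_primeful scale Rg Mg K \<longleftrightarrow>
     (\<forall>p. graded_prime_ideal Rg p \<and> colon scale K \<subseteq> p \<longrightarrow>
        (\<exists>P. graded_prime_submodule scale Rg Mg P \<and> K \<subseteq> P \<and> colon scale P = p))"

definition graded_quasi_primary ::
  "('r::comm_ring_1 \<Rightarrow> 'm::ab_group_add \<Rightarrow> 'm) \<Rightarrow> ('g \<Rightarrow> 'r set) \<Rightarrow> ('g \<Rightarrow> 'm set) \<Rightarrow> 'm set \<Rightarrow> bool" where
  "graded_quasi_primary scale Rg Mg Q \<longleftrightarrow> graded_submodule scale Mg Q \<and> Q \<noteq> UNIV
     \<and> (\<forall>r\<in>homog Rg. \<forall>m\<in>homog Mg. scale r m \<in> Q \<longrightarrow>
          r \<in> Gr Rg (colon scale Q) \<or> m \<in> GrM scale Rg Mg Q)"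

definition qpSpec ::
  "('r::comm_ring_1 \<Rightarrow> 'm::ab_group_add \<Rightarrow> 'm) \<Rightarrow> ('g \<Rightarrow> 'r set) \<Rightarrow> ('g \<Rightarrow> 'm set) \<Rightarrow> 'm set set" where
  "qpSpec scale Rg Mg = {Q. graded_quasi_primary scale Rg Mg Q \<and> graded_primeful scale Rg Mg Q}"

definition qpV ::
  "('r::comm_ring_1 \<Rightarrow> 'm::ab_group_add \<Rightarrow> 'm) \<Rightarrow> ('g \<Rightarrow> 'r set) \<Rightarrow> ('g \<Rightarrow> 'm set) \<Rightarrow> 'm set \<Rightarrow> 'm set set" where
  "qpV scale Rg Mg K = {Q \<in> qpSpec scale Rg Mg. Gr Rg (colon scale K) \<subseteq> Gr Rg (colon scale Q)}"

definition qp_closed ::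
  "('r::comm_ring_1 \<Rightarrow> 'm::ab_group_add \<Rightarrow> 'm) \<Rightarrow> ('g \<Rightarrow> 'r set) \<Rightarrow> ('g \<Rightarrow> 'm set) \<Rightarrow> 'm set set \<Rightarrow> bool" where
  "qp_closed scale Rg Mg F \<longleftrightarrow> (\<exists>K. graded_submodule scale Mg K \<and> F = qpV scale Rg Mg K)"

definition qp_open ::
  "('r::comm_ring_1 \<Rightarrow> 'm::ab_group_add \<Rightarrow> 'm) \<Rightarrow> ('g \<Rightarrow> 'r set) \<Rightarrow> ('g \<Rightarrow> 'm set) \<Rightarrow> 'm set set \<Rightarrow> bool" where
  "qp_open scale Rg Mg U \<longleftrightarrow> U \<subseteq> qpSpec scale Rg Mg \<and> qp_closed scale Rg Mg (qpSpec scale Rg Mg - U)"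

definition qp_T0 ::
  "('r::comm_ring_1 \<Rightarrow> 'm::ab_group_add \<Rightarrow> 'm) \<Rightarrow> ('g \<Rightarrow> 'r set) \<Rightarrow> ('g \<Rightarrow> 'm set) \<Rightarrow> bool" where
  "qp_T0 scale Rg Mg \<longleftrightarrow> (\<forall>x\<in>qpSpec scale Rg Mg. \<forall>y\<in>qpSpec scale Rg Mg. x \<noteq> y \<longrightarrow>
     (\<exists>U. qp_open scale Rg Mg U \<and> (x \<in> U \<longleftrightarrow> y \<notin> U)))"

definition qp_T1 ::
  "('r::comm_ring_1 \<Rightarrow> 'm::ab_group_add \<Rightarrow> 'm) \<Rightarrow> ('g \<Rightarrow> 'r set) \<Rightarrow> ('g \<Rightarrow> 'm set) \<Rightarrow> bool" where
  "qp_T1 scale Rg Mg \<longleftrightarrow> (\<forall>x\<in>qpSpec scale Rg Mg. \<forall>y\<in>qpSpec scale Rg Mg. x \<noteq> y \<longrightarrow>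
     (\<exists>U. qp_open scale Rg Mg U \<and> x \<in> U \<and> y \<notin> U))"

definition Max_g ::
  "('r::comm_ring_1 \<Rightarrow> 'm::ab_group_add \<Rightarrow> 'm) \<Rightarrow> ('g \<Rightarrow> 'm set) \<Rightarrow> 'm set set" where
  "Max_g scale Mg = {K. graded_submodule scale Mg K \<and> K \<noteq> UNIV \<and>
     (\<forall>L. graded_submodule scale Mg L \<and> K \<subseteq> L \<longrightarrow> L = K \<or> L = UNIV)}"

end

theory Submission
  imports Defs
begin

lemma hcomp_decomp: "direct_decomp A \<Longrightarrow> is_decomp A x (hcomp A x)"
  unfolding hcomp_def direct_decomp_def by (metis theI')

lemma hcomp_unique: "direct_decomp A \<Longrightarrow> is_decomp A x c \<Longrightarrow> hcomp A x = c"
  unfolding hcomp_def direct_decomp_def by (metis the1_equality)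

lemma hcomp_in: "direct_decomp A \<Longrightarrow> hcomp A x g \<in> A g"
  using hcomp_decomp unfolding is_decomp_def by blast

lemma hcomp_fin: "direct_decomp A \<Longrightarrow> finite {g. hcomp A x g \<noteq> 0}"
  using hcomp_decomp unfolding is_decomp_def by blast

lemma hcomp_sum: "direct_decomp A \<Longrightarrow> x = sum (hcomp A x) {g. hcomp A x g \<noteq> 0}"
  using hcomp_decomp unfolding is_decomp_def by blast

lemma shift_sum:
  fixes c :: "'g::group_add \<Rightarrow> 'a::comm_monoid_add"
  assumes fin: "finite S" and z: "\<And>g'. c g' \<noteq> 0 \<Longrightarrow> g' - h \<in> S"
  shows "sum (\<lambda>g. c (g + h)) S = sum c {g'. c g' \<noteq> 0}"
    and "finite {g'. c g' \<noteq> 0}"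
proof -
  have sub: "{g'. c g' \<noteq> 0} \<subseteq> (\<lambda>g. g + h) ` S"
  proof
    fix g' assume "g' \<in> {g'. c g' \<noteq> 0}"
    then have "g' - h \<in> S" using z by auto
    moreover have "g' = (g' - h) + h" by simp
    ultimately show "g' \<in> (\<lambda>g. g + h) ` S" by blast
  qed
  have fT: "finite ((\<lambda>g. g + h) ` S)" using fin by simp
  show "finite {g'. c g' \<noteq> 0}" using finite_subset[OF sub fT] .
  have inj: "inj_on (\<lambda>g. g + h) S" by (rule inj_onI) simp
  have "sum (\<lambda>g. c (g + h)) S = sum c ((\<lambda>g. g + h) ` S)"
    using sum.reindex[OF inj, of c] by simp
  also have "\<dots> = sum c {g'. c g' \<noteq> 0}"
    by (rule sum.mono_neutral_right[OF fT sub]) auto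
  finally show "sum (\<lambda>g. c (g + h)) S = sum c {g'. c g' \<noteq> 0}" .
qed

lemma hcomp_mult_homog:
  assumes gr: "graded_ring Rg" and b: "b \<in> Rg h"
  shows "hcomp Rg (r * b) (g + h) = hcomp Rg r g * b"
proof -
  have dd: "direct_decomp Rg" and mul: "\<And>g h a b. a \<in> Rg g \<Longrightarrow> b \<in> Rg h \<Longrightarrow> a * b \<in> Rg (g + h)"
    using gr unfolding graded_ring_def by blast+
  define c where "c = (\<lambda>g'. hcomp Rg r (g' - h) * b)"
  define S where "S = {g. hcomp Rg r g \<noteq> 0}"
  have fS: "finite S" using hcomp_fin[OF dd] S_def by simp
  have z: "g' - h \<in> S" if "c g' \<noteq> 0" for g'
    using that unfolding c_def S_def by auto
  note sh = shift_sum[OF fS z]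
  have "is_decomp Rg (r * b) c"
    unfolding is_decomp_def
  proof (intro conjI allI)
    show "finite {g. c g \<noteq> 0}" using sh(2) .
    fix g' show "c g' \<in> Rg g'"
      using mul[OF hcomp_in[OF dd] b, of r "g' - h"] unfolding c_def by simp
  next
    have "r * b = sum (hcomp Rg r) S * b" using hcomp_sum[OF dd, of r] S_def by simp
    also have "\<dots> = sum (\<lambda>g. c (g + h)) S" by (simp add: sum_distrib_right c_def)
    also have "\<dots> = sum c {g'. c g' \<noteq> 0}" using sh(1) .
    finally show "r * b = sum c {g'. c g' \<noteq> 0}" .
  qed
  then have "hcomp Rg (r * b) = c" using hcomp_unique[OF dd] by blast
  then show ?thesis unfolding c_def by simp
qed

lemma hcomp_scale_homog:
  assumes gm: "graded_module scale Rg Mg" and m: "m \<in> Mg h"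
  shows "hcomp Mg (scale r m) (g + h) = scale (hcomp Rg r g) m"
proof -
  have md: "module scale" and gr: "graded_ring Rg" and dd: "direct_decomp Mg"
    and mul: "\<And>g h a b. a \<in> Rg g \<Longrightarrow> b \<in> Mg h \<Longrightarrow> scale a b \<in> Mg (g + h)"
    using gm unfolding graded_module_def by blast+
  have ddr: "direct_decomp Rg" using gr unfolding graded_ring_def by blast
  define c where "c = (\<lambda>g'. scale (hcomp Rg r (g' - h)) m)"
  define S where "S = {g. hcomp Rg r g \<noteq> 0}"
  have fS: "finite S" using hcomp_fin[OF ddr] S_def by simp
  have z: "g' - h \<in> S" if "c g' \<noteq> 0" for g'
    using that module.scale_zero_left[OF md] unfolding c_def S_def by auto
  note sh = shift_sum[OF fS z]
  have "is_decomp Mg (scale r m) c"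
    unfolding is_decomp_def
  proof (intro conjI allI)
    show "finite {g. c g \<noteq> 0}" using sh(2) .
    fix g' show "c g' \<in> Mg g'"
      using mul[OF hcomp_in[OF ddr] m, of r "g' - h"] unfolding c_def by simp
  next
    have "scale r m = scale (sum (hcomp Rg r) S) m" using hcomp_sum[OF ddr, of r] S_def by simp
    also have "\<dots> = sum (\<lambda>g. c (g + h)) S" by (simp add: module.scale_sum_left[OF md] c_def)
    also have "\<dots> = sum c {g'. c g' \<noteq> 0}" using sh(1) .
    finally show "scale r m = sum c {g'. c g' \<noteq> 0}" .
  qed
  then have "hcomp Mg (scale r m) = c" using hcomp_unique[OF dd] by blast
  then show ?thesis unfolding c_def by simp
qed


lemma colon_graded:
  assumes gm: "graded_module scale Rg Mg" and x: "graded_submodule scale Mg x"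
  shows "graded_ideal Rg (colon scale x)"
proof -
  have md: "module scale" and gr: "graded_ring Rg" and dd: "direct_decomp Mg"
    using gm unfolding graded_module_def by blast+
  have sx: "module.subspace scale x" and hx: "\<And>y g. y \<in> x \<Longrightarrow> hcomp Mg y g \<in> x"
    using x unfolding graded_submodule_def by blast+
  have z0: "scale 0 m \<in> x" for m using module.subspace_0[OF md sx] module.scale_zero_left[OF md] by simp
  have zs: "scale (a + b) m \<in> x" if "\<forall>m. scale a m \<in> x" "\<forall>m. scale b m \<in> x" for a b m
    using that module.subspace_add[OF md sx] module.scale_left_distrib[OF md] by simp
  have zm: "scale (r * a) m \<in> x" if "\<forall>m. scale a m \<in> x" for r a m
    using that module.subspace_scale[OF md sx, of "scale a m" r] module.scale_scale[OF md, of r a m] by simp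
  have id: "is_ideal (colon scale x)"
    unfolding is_ideal_def colon_def using z0 zs zm by (simp add: z0 zs zm)
  have "hcomp Rg a g \<in> colon scale x" if a: "a \<in> colon scale x" for a g
  proof -
    have hom: "scale (hcomp Rg a g) n \<in> x" if "n \<in> Mg h" for n h
    proof -
      have "scale a n \<in> x" using a unfolding colon_def by blast
      then have "hcomp Mg (scale a n) (g + h) \<in> x" by (rule hx)
      then show ?thesis using hcomp_scale_homog[OF gm that] by simp
    qed
    have "scale (hcomp Rg a g) n \<in> x" for n
    proof -
      have "scale (hcomp Rg a g) n = scale (hcomp Rg a g) (sum (hcomp Mg n) {h. hcomp Mg n h \<noteq> 0})"
        using hcomp_sum[OF dd, of n] by simp
      also have "\<dots> = (\<Sum>h\<in>{h. hcomp Mg n h \<noteq> 0}. scale (hcomp Rg a g) (hcomp Mg n h))"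
        by (rule module.scale_sum_right[OF md])
      also have "\<dots> \<in> x"
        by (rule module.subspace_sum[OF md sx]) (rule hom[OF hcomp_in[OF dd]])
      finally show ?thesis .
    qed
    then show ?thesis unfolding colon_def by blast
  qed
  then show ?thesis using id unfolding graded_ideal_def by blast
qed

lemma colon_proper:
  assumes md: "module scale" and "x \<noteq> UNIV"
  shows "1 \<notin> colon scale x"
  using assms module.scale_one[OF md] unfolding colon_def by auto

lemma colon_mono: "K \<subseteq> L \<Longrightarrow> colon scale K \<subseteq> colon scale L"
  unfolding colon_def by auto

lemma Gr_mono: "I \<subseteq> J \<Longrightarrow> Gr Rg I \<subseteq> Gr Rg J"
  unfolding Gr_def by blast

lemma sub_Gr: "graded_ideal Rg I \<Longrightarrow> I \<subseteq> Gr Rg I"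
  unfolding Gr_def graded_ideal_def by (auto intro!: exI[of _ 1])

lemma ideal_sum:
  assumes I: "is_ideal I" and fin: "finite S" and f: "\<And>s. s \<in> S \<Longrightarrow> f s \<in> I"
  shows "sum f S \<in> I"
  using fin f
proof (induction S rule: finite_induct)
  case empty then show ?case using I unfolding is_ideal_def by simp
next
  case (insert a F) then show ?case using I unfolding is_ideal_def by simp
qed

lemma ideal_one: "is_ideal I \<Longrightarrow> 1 \<in> I \<Longrightarrow> b \<in> I"
  unfolding is_ideal_def by (metis mult.right_neutral)

lemma pow_homog:
  assumes gr: "graded_ring Rg" and a: "a \<in> Rg g"
  shows "\<exists>g'. a ^ Suc n \<in> Rg g'"
proof (induction n)
  case 0 then show ?case using a by auto
next
  case (Suc n)
  then obtain g' where "a ^ Suc n \<in> Rg g'" by blast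
  then have "a * a ^ Suc n \<in> Rg (g + g')" using gr a unfolding graded_ring_def by blast
  then show ?case by (metis power_Suc)
qed

lemma Gr_sub_prime:
  assumes gr: "graded_ring Rg" and p: "graded_prime_ideal Rg p"
  shows "Gr Rg p \<subseteq> p"
proof
  fix r assume r: "r \<in> Gr Rg p"
  have dd: "direct_decomp Rg" using gr unfolding graded_ring_def by blast
  have idp: "is_ideal p" using p unfolding graded_prime_ideal_def graded_ideal_def by blast
  have pr: "\<And>a b. a \<in> homog Rg \<Longrightarrow> b \<in> homog Rg \<Longrightarrow> a * b \<in> p \<Longrightarrow> a \<in> p \<or> b \<in> p"
    using p unfolding graded_prime_ideal_def by blast
  have powp: "a \<in> p" if ah: "a \<in> Rg g" and an: "a ^ Suc n \<in> p" for a g n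
    using an
  proof (induction n)
    case 0 then show ?case by simp
  next
    case (Suc n)
    obtain g' where "a ^ Suc n \<in> Rg g'" using pow_homog[OF gr ah] by blast
    then have "a ^ Suc n \<in> homog Rg" "a \<in> homog Rg" using ah unfolding homog_def by blast+
    moreover have "a * a ^ Suc n \<in> p" using Suc.prems by (metis power_Suc)
    ultimately show ?case using pr Suc.IH by blast
  qed
  have comp: "hcomp Rg r g \<in> p" for g
  proof -
    obtain n where "n > 0" "hcomp Rg r g ^ n \<in> p" using r unfolding Gr_def by blast
    then obtain k where "hcomp Rg r g ^ Suc k \<in> p" by (metis Suc_pred)
    then show ?thesis using powp[OF hcomp_in[OF dd]] by blast
  qed
  have "sum (hcomp Rg r) {g. hcomp Rg r g \<noteq> 0} \<in> p"
    by (rule ideal_sum[OF idp hcomp_fin[OF dd]]) (rule comp)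
  then show "r \<in> p" using hcomp_sum[OF dd, of r] by simp
qed

definition gmax :: "('g \<Rightarrow> 'r::comm_ring_1 set) \<Rightarrow> 'r set \<Rightarrow> bool" where
  "gmax Rg m \<longleftrightarrow> graded_ideal Rg m \<and> 1 \<notin> m \<and> (\<forall>I. graded_ideal Rg I \<and> 1 \<notin> I \<and> m \<subseteq> I \<longrightarrow> I = m)"

lemma exists_gmax:
  assumes J: "graded_ideal Rg J" "1 \<notin> J"
  shows "\<exists>m. gmax Rg m \<and> J \<subseteq> m"
proof -
  define A where "A = {I. graded_ideal Rg I \<and> 1 \<notin> I \<and> J \<subseteq> I}"
  have "\<exists>M\<in>A. \<forall>X\<in>A. M \<subseteq> X \<longrightarrow> X = M"
  proof (rule subset_Zorn_nonempty)
    show "A \<noteq> {}" using J A_def by blast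
  next
    fix C assume ne: "C \<noteq> {}" and ch: "subset.chain A C"
    have CA: "C \<subseteq> A" and tot: "\<And>X Y. X \<in> C \<Longrightarrow> Y \<in> C \<Longrightarrow> X \<subseteq> Y \<or> Y \<subseteq> X"
      using ch unfolding subset_chain_def by blast+
    have gi: "\<And>X. X \<in> C \<Longrightarrow> graded_ideal Rg X \<and> 1 \<notin> X \<and> J \<subseteq> X" using CA A_def by blast
    obtain X0 where X0: "X0 \<in> C" using ne by blast
    have "is_ideal (\<Union>C)"
      unfolding is_ideal_def
    proof (intro conjI ballI allI)
      show "0 \<in> \<Union>C" using gi[OF X0] X0 unfolding graded_ideal_def is_ideal_def by blast
    next
      fix a b assume "a \<in> \<Union>C" "b \<in> \<Union>C"
      then obtain X Y where XY: "X \<in> C" "Y \<in> C" "a \<in> X" "b \<in> Y" by blast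
      show "a + b \<in> \<Union>C"
      proof (cases "X \<subseteq> Y")
        case True then show ?thesis using XY gi[OF XY(2)] unfolding graded_ideal_def is_ideal_def by blast
      next
        case False then have "Y \<subseteq> X" using tot XY by blast
        then show ?thesis using XY gi[OF XY(1)] unfolding graded_ideal_def is_ideal_def by blast
      qed
    next
      fix r a assume "a \<in> \<Union>C"
      then obtain X where "X \<in> C" "a \<in> X" by blast
      then show "r * a \<in> \<Union>C" using gi unfolding graded_ideal_def is_ideal_def by blast
    qed
    moreover have "\<forall>a\<in>\<Union>C. \<forall>g. hcomp Rg a g \<in> \<Union>C"
      using gi unfolding graded_ideal_def by blast
    moreover have "1 \<notin> \<Union>C" using gi by blast
    moreover have "J \<subseteq> \<Union>C" using gi X0 by blast
    ultimately show "\<Union>C \<in> A" unfolding A_def graded_ideal_def by blast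
  qed
  then obtain M where "M \<in> A" "\<forall>X\<in>A. M \<subseteq> X \<longrightarrow> X = M" by blast
  then show ?thesis unfolding gmax_def A_def by blast
qed

lemma gmax_prime:
  assumes gr: "graded_ring Rg" and m: "gmax Rg m"
  shows "graded_prime_ideal Rg m"
proof -
  have gm: "graded_ideal Rg m" and one: "1 \<notin> m"
    and mx: "\<And>I. graded_ideal Rg I \<Longrightarrow> 1 \<notin> I \<Longrightarrow> m \<subseteq> I \<Longrightarrow> I = m"
    using m unfolding gmax_def by blast+
  have idm: "is_ideal m" and hm: "\<And>y g. y \<in> m \<Longrightarrow> hcomp Rg y g \<in> m"
    using gm unfolding graded_ideal_def by blast+
  have "a \<in> m \<or> b \<in> m" if a: "a \<in> homog Rg" and b: "b \<in> homog Rg" and ab: "a * b \<in> m" for a b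
  proof (rule ccontr)
    assume nab: "\<not> (a \<in> m \<or> b \<in> m)"
    obtain h where bh: "b \<in> Rg h" using b unfolding homog_def by blast
    define I where "I = {r. r * b \<in> m}"
    have idI: "is_ideal I" using idm unfolding I_def is_ideal_def
      by (simp add: distrib_right mult.assoc)
    have "hcomp Rg r g \<in> I" if "r \<in> I" for r g
    proof -
      have "hcomp Rg (r * b) (g + h) \<in> m" using that hm unfolding I_def by blast
      then show ?thesis using hcomp_mult_homog[OF gr bh] unfolding I_def by simp
    qed
    then have gI: "graded_ideal Rg I" using idI unfolding graded_ideal_def by blast
    have mI: "m \<subseteq> I"
    proof
      fix r assume "r \<in> m"
      then have "b * r \<in> m" using idm unfolding is_ideal_def by blast
      then show "r \<in> I" unfolding I_def by (simp add: mult.commute)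
    qed
    have "1 \<notin> I" using nab unfolding I_def by simp
    then have "I = m" using mx[OF gI _ mI] by blast
    moreover have "a \<in> I" using ab unfolding I_def by simp
    ultimately show False using nab by blast
  qed
  moreover have "m \<noteq> UNIV" using one by blast
  ultimately show ?thesis unfolding graded_prime_ideal_def using gm by blast
qed


lemma qpSpec_D: "Q \<in> qpSpec scale Rg Mg \<Longrightarrow> graded_submodule scale Mg Q \<and> Q \<noteq> UNIV"
  unfolding qpSpec_def graded_quasi_primary_def by blast

lemma qpV_sub: "qpV scale Rg Mg K \<subseteq> qpSpec scale Rg Mg"
  unfolding qpV_def by blast

lemma T1_iff:
  "qp_T1 scale Rg Mg \<longleftrightarrow> (\<forall>x\<in>qpSpec scale Rg Mg. \<forall>y\<in>qpSpec scale Rg Mg. x \<noteq> y \<longrightarrow>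
      \<not> Gr Rg (colon scale y) \<subseteq> Gr Rg (colon scale x))"
  (is "?L \<longleftrightarrow> ?R")
proof
  assume L: ?L
  show ?R
  proof (intro ballI impI notI)
    fix x y assume x: "x \<in> qpSpec scale Rg Mg" and y: "y \<in> qpSpec scale Rg Mg" and ne: "x \<noteq> y"
      and sub: "Gr Rg (colon scale y) \<subseteq> Gr Rg (colon scale x)"
    obtain U where U: "qp_open scale Rg Mg U" "x \<in> U" "y \<notin> U" using L x y ne unfolding qp_T1_def by blast
    obtain K where K: "qpSpec scale Rg Mg - U = qpV scale Rg Mg K"
      using U(1) unfolding qp_open_def qp_closed_def by blast
    have "y \<in> qpV scale Rg Mg K" using K y U(3) by blast
    then have "Gr Rg (colon scale K) \<subseteq> Gr Rg (colon scale y)" unfolding qpV_def by blast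
    then have "x \<in> qpV scale Rg Mg K" using sub x unfolding qpV_def by blast
    then show False using K U(2) by blast
  qed
next
  assume R: ?R
  show ?L unfolding qp_T1_def
  proof (intro ballI impI)
    fix x y assume x: "x \<in> qpSpec scale Rg Mg" and y: "y \<in> qpSpec scale Rg Mg" and ne: "x \<noteq> y"
    define U where "U = qpSpec scale Rg Mg - qpV scale Rg Mg y"
    have "qp_open scale Rg Mg U"
      unfolding qp_open_def qp_closed_def U_def using qpSpec_D[OF y] qpV_sub[of scale Rg Mg y]
      by (metis Diff_Diff_Int Diff_subset inf.absorb_iff2)
    moreover have "x \<in> U" using R x y ne unfolding U_def qpV_def by blast
    moreover have "y \<notin> U" unfolding U_def qpV_def using y by blast
    ultimately show "\<exists>U. qp_open scale Rg Mg U \<and> x \<in> U \<and> y \<notin> U" by blast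
  qed
qed

lemma T0_iff:
  "qp_T0 scale Rg Mg \<longleftrightarrow> (\<forall>x\<in>qpSpec scale Rg Mg. \<forall>y\<in>qpSpec scale Rg Mg. x \<noteq> y \<longrightarrow>
      Gr Rg (colon scale x) \<noteq> Gr Rg (colon scale y))"
  (is "?L \<longleftrightarrow> ?R")
proof
  assume L: ?L
  show ?R
  proof (intro ballI impI notI)
    fix x y assume x: "x \<in> qpSpec scale Rg Mg" and y: "y \<in> qpSpec scale Rg Mg" and ne: "x \<noteq> y"
      and eq: "Gr Rg (colon scale x) = Gr Rg (colon scale y)"
    obtain U where U: "qp_open scale Rg Mg U" "x \<in> U \<longleftrightarrow> y \<notin> U" using L x y ne unfolding qp_T0_def by blast
    obtain K where K: "qpSpec scale Rg Mg - U = qpV scale Rg Mg K"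
      using U(1) unfolding qp_open_def qp_closed_def by blast
    have "x \<in> qpV scale Rg Mg K \<longleftrightarrow> y \<in> qpV scale Rg Mg K" using x y eq unfolding qpV_def by blast
    then show False using K U(2) x y by blast
  qed
next
  assume R: ?R
  show ?L unfolding qp_T0_def
  proof (intro ballI impI)
    fix x y assume x: "x \<in> qpSpec scale Rg Mg" and y: "y \<in> qpSpec scale Rg Mg" and ne: "x \<noteq> y"
    have op: "qp_open scale Rg Mg (qpSpec scale Rg Mg - qpV scale Rg Mg z)" if "z \<in> qpSpec scale Rg Mg" for z
      unfolding qp_open_def qp_closed_def using qpSpec_D[OF that] qpV_sub[of scale Rg Mg z]
      by (metis Diff_Diff_Int Diff_subset inf.absorb_iff2)
    have ne2: "Gr Rg (colon scale x) \<noteq> Gr Rg (colon scale y)" using R x y ne by blast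
    show "\<exists>U. qp_open scale Rg Mg U \<and> (x \<in> U \<longleftrightarrow> y \<notin> U)"
    proof (cases "Gr Rg (colon scale y) \<subseteq> Gr Rg (colon scale x)")
      case True
      then have "\<not> Gr Rg (colon scale x) \<subseteq> Gr Rg (colon scale y)" using ne2 by blast
      then have "(y \<in> qpSpec scale Rg Mg - qpV scale Rg Mg x) \<and> x \<notin> qpSpec scale Rg Mg - qpV scale Rg Mg x"
        using x y unfolding qpV_def by blast
      then show ?thesis using op[OF x] by blast
    next
      case False
      then have "(x \<in> qpSpec scale Rg Mg - qpV scale Rg Mg y) \<and> y \<notin> qpSpec scale Rg Mg - qpV scale Rg Mg y"
        using x y unfolding qpV_def by blast
      then show ?thesis using op[OF y] by blast
    qed
  qed
qed

lemma key:
  assumes gm: "graded_module scale Rg Mg"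
    and anti: "\<forall>Q\<in>qpSpec scale Rg Mg. \<forall>K\<in>qpSpec scale Rg Mg. Q \<subseteq> K \<longrightarrow> K = Q"
    and x: "x \<in> qpSpec scale Rg Mg"
  shows "gmax Rg (colon scale x)"
proof -
  have md: "module scale" and gr: "graded_ring Rg"
    using gm unfolding graded_module_def by blast+
  have xg: "graded_submodule scale Mg x" and xp: "x \<noteq> UNIV" using qpSpec_D[OF x] by blast+
  have J: "graded_ideal Rg (colon scale x)" "1 \<notin> colon scale x"
    using colon_graded[OF gm xg] colon_proper[OF md xp] by blast+
  obtain m where m: "gmax Rg m" "colon scale x \<subseteq> m" using exists_gmax[OF J] by blast
  have mp: "graded_prime_ideal Rg m" using gmax_prime[OF gr m(1)] .
  have pf: "graded_primeful scale Rg Mg x" using x unfolding qpSpec_def by blast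
  obtain P where P: "graded_prime_submodule scale Rg Mg P" "x \<subseteq> P" "colon scale P = m"
    using pf mp m(2) unfolding graded_primeful_def by blast
  have Pg: "graded_submodule scale Mg P" and PU: "P \<noteq> UNIV"
    and Ppr: "\<And>r n. r \<in> homog Rg \<Longrightarrow> n \<in> homog Mg \<Longrightarrow> scale r n \<in> P \<Longrightarrow> n \<in> P \<or> r \<in> colon scale P"
    using P(1) unfolding graded_prime_submodule_def by blast+
  have "P \<subseteq> GrM scale Rg Mg P" unfolding GrM_def by blast
  moreover have "colon scale P \<subseteq> Gr Rg (colon scale P)" using sub_Gr[OF colon_graded[OF gm Pg]] .
  ultimately have qp: "graded_quasi_primary scale Rg Mg P"
    unfolding graded_quasi_primary_def using Pg PU Ppr by blast
  have "graded_primeful scale Rg Mg P"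
    unfolding graded_primeful_def
  proof (intro allI impI)
    fix p assume p: "graded_prime_ideal Rg p \<and> colon scale P \<subseteq> p"
    have gp: "graded_ideal Rg p" and pU: "p \<noteq> UNIV" using p unfolding graded_prime_ideal_def by blast+
    have "1 \<notin> p" using pU ideal_one gp unfolding graded_ideal_def by blast
    then have "p = m" using m(1) gp p P(3) unfolding gmax_def by blast
    then show "\<exists>P'. graded_prime_submodule scale Rg Mg P' \<and> P \<subseteq> P' \<and> colon scale P' = p"
      using P by blast
  qed
  then have "P \<in> qpSpec scale Rg Mg" using qp unfolding qpSpec_def by blast
  then have "P = x" using anti x P(2) by blast
  then show ?thesis using m P(3) by simp
qed

lemma T1_of_anti:
  assumes gm: "graded_module scale Rg Mg" and t0: "qp_T0 scale Rg Mg"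
    and anti: "\<forall>Q\<in>qpSpec scale Rg Mg. \<forall>K\<in>qpSpec scale Rg Mg. Q \<subseteq> K \<longrightarrow> K = Q"
  shows "qp_T1 scale Rg Mg"
  unfolding T1_iff
proof (intro ballI impI notI)
  have gr: "graded_ring Rg" using gm unfolding graded_module_def by blast
  fix x y assume x: "x \<in> qpSpec scale Rg Mg" and y: "y \<in> qpSpec scale Rg Mg" and ne: "x \<noteq> y"
    and sub: "Gr Rg (colon scale y) \<subseteq> Gr Rg (colon scale x)"
  have kx: "gmax Rg (colon scale x)" and ky: "gmax Rg (colon scale y)" using key[OF gm anti] x y by blast+
  have "colon scale y \<subseteq> Gr Rg (colon scale y)"
    using sub_Gr ky unfolding gmax_def by blast
  also have "\<dots> \<subseteq> Gr Rg (colon scale x)" using sub .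
  also have "\<dots> \<subseteq> colon scale x" using Gr_sub_prime[OF gr gmax_prime[OF gr kx]] .
  finally have "colon scale y \<subseteq> colon scale x" .
  then have "colon scale x = colon scale y" using kx ky unfolding gmax_def by blast
  then show False using t0 x y ne unfolding T0_iff by metis
qed


lemma mono_phi: "Q \<subseteq> K \<Longrightarrow> Gr Rg (colon scale Q) \<subseteq> Gr Rg (colon scale K)"
  by (rule Gr_mono[OF colon_mono])

lemma T1T0: "qp_T1 scale Rg Mg \<Longrightarrow> qp_T0 scale Rg Mg"
  unfolding T1_iff T0_iff by blast

lemma part1:
  "(qp_T1 scale Rg Mg \<longleftrightarrow> qp_T0 scale Rg Mg \<and>
        (\<forall>Q\<in>qpSpec scale Rg Mg. \<forall>K\<in>qpSpec scale Rg Mg.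
            Gr Rg (colon scale Q) \<subseteq> Gr Rg (colon scale K) \<longrightarrow>
            Gr Rg (colon scale K) = Gr Rg (colon scale Q)))"
proof
  assume t1: "qp_T1 scale Rg Mg"
  have "\<forall>Q\<in>qpSpec scale Rg Mg. \<forall>K\<in>qpSpec scale Rg Mg.
            Gr Rg (colon scale Q) \<subseteq> Gr Rg (colon scale K) \<longrightarrow>
            Gr Rg (colon scale K) = Gr Rg (colon scale Q)"
  proof (intro ballI impI)
    fix Q K assume Q: "Q \<in> qpSpec scale Rg Mg" and K: "K \<in> qpSpec scale Rg Mg"
      and s: "Gr Rg (colon scale Q) \<subseteq> Gr Rg (colon scale K)"
    have "K = Q"
    proof (rule ccontr)
      assume "K \<noteq> Q"
      then show False using t1 Q K s unfolding T1_iff by blast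
    qed
    then show "Gr Rg (colon scale K) = Gr Rg (colon scale Q)" by simp
  qed
  then show "qp_T0 scale Rg Mg \<and>
        (\<forall>Q\<in>qpSpec scale Rg Mg. \<forall>K\<in>qpSpec scale Rg Mg.
            Gr Rg (colon scale Q) \<subseteq> Gr Rg (colon scale K) \<longrightarrow>
            Gr Rg (colon scale K) = Gr Rg (colon scale Q))"
    using T1T0[OF t1] by blast
next
  assume "qp_T0 scale Rg Mg \<and>
        (\<forall>Q\<in>qpSpec scale Rg Mg. \<forall>K\<in>qpSpec scale Rg Mg.
            Gr Rg (colon scale Q) \<subseteq> Gr Rg (colon scale K) \<longrightarrow>
            Gr Rg (colon scale K) = Gr Rg (colon scale Q))"
  then have t0: "qp_T0 scale Rg Mg" and p: "\<forall>Q\<in>qpSpec scale Rg Mg. \<forall>K\<in>qpSpec scale Rg Mg.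
            Gr Rg (colon scale Q) \<subseteq> Gr Rg (colon scale K) \<longrightarrow>
            Gr Rg (colon scale K) = Gr Rg (colon scale Q)" by blast+
  show "qp_T1 scale Rg Mg" unfolding T1_iff
  proof (intro ballI impI notI)
    fix x y assume x: "x \<in> qpSpec scale Rg Mg" and y: "y \<in> qpSpec scale Rg Mg" and ne: "x \<noteq> y"
      and sub: "Gr Rg (colon scale y) \<subseteq> Gr Rg (colon scale x)"
    have "Gr Rg (colon scale x) = Gr Rg (colon scale y)" using p x y sub by blast
    then show False using t0 x y ne unfolding T0_iff by blast
  qed
qed

lemma part2:
  assumes gm: "graded_module scale Rg Mg"
  shows "(qp_T1 scale Rg Mg \<longleftrightarrow> qp_T0 scale Rg Mg \<and>
        (\<forall>Q\<in>qpSpec scale Rg Mg. \<forall>K\<in>qpSpec scale Rg Mg. Q \<subseteq> K \<longrightarrow> K = Q))"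
proof
  assume t1: "qp_T1 scale Rg Mg"
  have "\<forall>Q\<in>qpSpec scale Rg Mg. \<forall>K\<in>qpSpec scale Rg Mg. Q \<subseteq> K \<longrightarrow> K = Q"
  proof (intro ballI impI)
    fix Q K assume Q: "Q \<in> qpSpec scale Rg Mg" and K: "K \<in> qpSpec scale Rg Mg" and s: "Q \<subseteq> K"
    have s2: "Gr Rg (colon scale Q) \<subseteq> Gr Rg (colon scale K)" using mono_phi[OF s] .
    show "K = Q"
    proof (rule ccontr)
      assume "K \<noteq> Q"
      then show False using t1 Q K s2 unfolding T1_iff by blast
    qed
  qed
  then show "qp_T0 scale Rg Mg \<and>
        (\<forall>Q\<in>qpSpec scale Rg Mg. \<forall>K\<in>qpSpec scale Rg Mg. Q \<subseteq> K \<longrightarrow> K = Q)"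
    using T1T0[OF t1] by blast
next
  assume a: "qp_T0 scale Rg Mg \<and>
        (\<forall>Q\<in>qpSpec scale Rg Mg. \<forall>K\<in>qpSpec scale Rg Mg. Q \<subseteq> K \<longrightarrow> K = Q)"
  show "qp_T1 scale Rg Mg" using T1_of_anti[OF gm] a by blast
qed

lemma part3:
  assumes gm: "graded_module scale Rg Mg"
  shows "({0} \<in> qpSpec scale Rg Mg \<longrightarrow>
        (qp_T1 scale Rg Mg \<longleftrightarrow> qpSpec scale Rg Mg = {{0}}))"
proof (intro impI iffI)
  have md: "module scale" using gm unfolding graded_module_def by blast
  assume z: "{0} \<in> qpSpec scale Rg Mg" and t1: "qp_T1 scale Rg Mg"
  have only0: "K = {0}" if K: "K \<in> qpSpec scale Rg Mg" for K
  proof (rule ccontr)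
    assume ne: "K \<noteq> {0}"
    have "module.subspace scale K" using qpSpec_D[OF K] unfolding graded_submodule_def by blast
    then have "{0} \<subseteq> K" using module.subspace_0[OF md] by blast
    then have "Gr Rg (colon scale {0}) \<subseteq> Gr Rg (colon scale K)" by (rule mono_phi)
    moreover have h: "\<forall>x\<in>qpSpec scale Rg Mg. \<forall>y\<in>qpSpec scale Rg Mg. x \<noteq> y \<longrightarrow>
      \<not> Gr Rg (colon scale y) \<subseteq> Gr Rg (colon scale x)" using t1 unfolding T1_iff .
    ultimately show False using h[rule_format, OF K z] ne by simp
  qed
  show "qpSpec scale Rg Mg = {{0}}"
  proof (intro equalityI subsetI)
    fix Q assume Q: "Q \<in> qpSpec scale Rg Mg"
    have "Q = {0}" using only0[OF Q] .
    then show "Q \<in> {{0}}" by simp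
  next
    fix Q assume "Q \<in> {{0::'b}}"
    then have "Q = {0}" by simp
    then show "Q \<in> qpSpec scale Rg Mg" using z by simp
  qed
next
  assume e: "qpSpec scale Rg Mg = {{0}}"
  show "qp_T1 scale Rg Mg" unfolding T1_iff e by simp
qed

lemma part4:
  assumes gm: "graded_module scale Rg Mg"
  shows "(qp_T0 scale Rg Mg \<and> qpSpec scale Rg Mg = Max_g scale Mg \<longrightarrow> qp_T1 scale Rg Mg)"
proof
  assume a: "qp_T0 scale Rg Mg \<and> qpSpec scale Rg Mg = Max_g scale Mg"
  have "\<forall>Q\<in>qpSpec scale Rg Mg. \<forall>K\<in>qpSpec scale Rg Mg. Q \<subseteq> K \<longrightarrow> K = Q"
  proof (intro ballI impI)
    fix Q K assume Q: "Q \<in> qpSpec scale Rg Mg" and K: "K \<in> qpSpec scale Rg Mg" and s: "Q \<subseteq> K"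
    have Qm: "Q \<in> Max_g scale Mg" and Km: "K \<in> Max_g scale Mg" using a Q K by simp_all
    have "graded_submodule scale Mg K" "K \<noteq> UNIV" using Km unfolding Max_g_def by simp_all
    moreover have "\<forall>L. graded_submodule scale Mg L \<and> Q \<subseteq> L \<longrightarrow> L = Q \<or> L = UNIV"
      using Qm unfolding Max_g_def by simp
    ultimately show "K = Q" using s by blast
  qed
  then show "qp_T1 scale Rg Mg" using T1_of_anti[OF gm] a by blast
qed

theorem theorem4p4:
  fixes scale :: "'r::comm_ring_1 \<Rightarrow> 'm::ab_group_add \<Rightarrow> 'm"
    and Rg :: "'g::group_add \<Rightarrow> 'r set"
    and Mg :: "'g \<Rightarrow> 'm set"
  assumes "graded_module scale Rg Mg"
  shows
    "(qp_T1 scale Rg Mg \<longleftrightarrow> qp_T0 scale Rg Mg \<and>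
        (\<forall>Q\<in>qpSpec scale Rg Mg. \<forall>K\<in>qpSpec scale Rg Mg.
            Gr Rg (colon scale Q) \<subseteq> Gr Rg (colon scale K) \<longrightarrow>
            Gr Rg (colon scale K) = Gr Rg (colon scale Q)))
   \<and> (qp_T1 scale Rg Mg \<longleftrightarrow> qp_T0 scale Rg Mg \<and>
        (\<forall>Q\<in>qpSpec scale Rg Mg. \<forall>K\<in>qpSpec scale Rg Mg. Q \<subseteq> K \<longrightarrow> K = Q))
   \<and> ({0} \<in> qpSpec scale Rg Mg \<longrightarrow>
        (qp_T1 scale Rg Mg \<longleftrightarrow> qpSpec scale Rg Mg = {{0}}))
   \<and> (qp_T0 scale Rg Mg \<and> qpSpec scale Rg Mg = Max_g scale Mg \<longrightarrow> qp_T1 scale Rg Mg)"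
  using part1[of scale Rg Mg] part2[OF assms] part3[OF assms] part4[OF assms] by (intro conjI)

end
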